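(* Let $K$ be a field, $d\ge 2$, and $p\ge 1$ an integer. Let $h\in K[x_{i_1,\dots,i_d}\mid i_j\in[p]]$ be a polynomial that can be written as $$h = x_{p,\dots,p}\,h' + r',$$ where $h'$ is a polynomial in the variables $x_{i_1,\dots,i_d}$ with all $i_j\in[p-1]$ having weight $(1^{p-1},\dots,1^{p-1})$, and $r'$ is a polynomial of weight $(1^p,\dots,1^p)$ not involving the variable $x_{p,\dots,p}$. Let $n_1,\dots,n_d\ge p$ and $T\in K^{n_1}\otimes\cdots\otimes K^{n_d}$, and let $G=\prod_{i=1}^d\mathrm{Sym}([n_i])$. Suppose that $(\sigma h)(T)=0$ for all $\sigma\in G$, but $(\sigma h')(T)\neq 0$ for some $\sigma\in G$. Then $$\mathrm{prk}(T)\le d(p-1)+\sum_{s=1}^{\lfloor d/2\rfloor}\binom{d}{s}(p-1)^{d-s}.$$ *)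

theory Defs
  imports "HOL-Library.Poly_Mapping" "HOL-Combinatorics.Permutations"
begin

text \<open>Variables x_{i_1,...,i_d} are indexed by lists [i_1,...,i_d] (1-based indices).
  Monomials: nat list \<Rightarrow>0 nat (exponent vectors); polynomials: monomial \<Rightarrow>0 coefficient.\<close>

type_synonym 'a tpoly = "(nat list \<Rightarrow>\<^sub>0 nat) \<Rightarrow>\<^sub>0 'a"

definition tvar :: "nat list \<Rightarrow> 'a::comm_semiring_1 tpoly" where
  "tvar v = Poly_Mapping.single (Poly_Mapping.single v 1) 1"

definition tvars :: "'a::zero tpoly \<Rightarrow> nat list set" where
  "tvars h = \<Union> (Poly_Mapping.keys ` Poly_Mapping.keys h)"

definition in_ring :: "nat \<Rightarrow> nat \<Rightarrow> 'a::zero tpoly \<Rightarrow> bool" where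
  "in_ring d q h \<longleftrightarrow> (\<forall>v\<in>tvars h. length v = d \<and> (\<forall>j<d. v ! j \<in> {1..q}))"

definition mweight :: "(nat list \<Rightarrow>\<^sub>0 nat) \<Rightarrow> nat \<Rightarrow> nat \<Rightarrow> nat" where
  "mweight m j i = (\<Sum>v\<in>{v\<in>Poly_Mapping.keys m. v ! j = i}. Poly_Mapping.lookup m v)"

definition has_weight_ones :: "nat \<Rightarrow> nat \<Rightarrow> 'a::zero tpoly \<Rightarrow> bool" where
  "has_weight_ones d q h \<longleftrightarrow> in_ring d q h \<and>
     (\<forall>m\<in>Poly_Mapping.keys h. \<forall>j<d. \<forall>i\<in>{1..q}. mweight m j i = 1)"

definition act_var :: "(nat \<Rightarrow> nat \<Rightarrow> nat) \<Rightarrow> nat list \<Rightarrow> nat list" where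
  "act_var \<sigma> v = map (\<lambda>j. \<sigma> j (v ! j)) [0..<length v]"

definition act_mono :: "(nat \<Rightarrow> nat \<Rightarrow> nat) \<Rightarrow> (nat list \<Rightarrow>\<^sub>0 nat) \<Rightarrow> (nat list \<Rightarrow>\<^sub>0 nat)" where
  "act_mono \<sigma> m = (\<Sum>v\<in>Poly_Mapping.keys m. Poly_Mapping.single (act_var \<sigma> v) (Poly_Mapping.lookup m v))"

definition act_poly :: "(nat \<Rightarrow> nat \<Rightarrow> nat) \<Rightarrow> 'a::comm_semiring_1 tpoly \<Rightarrow> 'a tpoly" where
  "act_poly \<sigma> h = (\<Sum>m\<in>Poly_Mapping.keys h. Poly_Mapping.single (act_mono \<sigma> m) (Poly_Mapping.lookup h m))"

definition peval :: "'a::comm_semiring_1 tpoly \<Rightarrow> (nat list \<Rightarrow> 'a) \<Rightarrow> 'a" where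
  "peval h T = (\<Sum>m\<in>Poly_Mapping.keys h. Poly_Mapping.lookup h m * (\<Prod>v\<in>Poly_Mapping.keys m. T v ^ Poly_Mapping.lookup m v))"

definition box :: "nat \<Rightarrow> (nat \<Rightarrow> nat) \<Rightarrow> nat list set" where
  "box d n = {i. length i = d \<and> (\<forall>j<d. i ! j \<in> {1..n j})}"

definition prk_decomp :: "nat \<Rightarrow> (nat \<Rightarrow> nat) \<Rightarrow> ('a::comm_semiring_1) itself \<Rightarrow> (nat list \<Rightarrow> 'a) \<Rightarrow> nat \<Rightarrow> bool" where
  "prk_decomp d n _ T r \<longleftrightarrow>
     (\<exists>S :: nat \<Rightarrow> nat set. \<exists>A B :: nat \<Rightarrow> nat list \<Rightarrow> 'a.
        (\<forall>k<r. S k \<noteq> {} \<and> S k \<subset> {0..<d}) \<and>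
        (\<forall>i\<in>box d n. T i = (\<Sum>k<r. A k (nths i (S k)) * B k (nths i ({0..<d} - S k)))))"

definition prk :: "nat \<Rightarrow> (nat \<Rightarrow> nat) \<Rightarrow> (nat list \<Rightarrow> 'a::comm_semiring_1) \<Rightarrow> nat" where
  "prk d n T = (LEAST r. prk_decomp d n TYPE('a) T r)"

end

theory Submission
  imports Defs
begin


definition pmono :: "(nat list \<Rightarrow> 'a::comm_semiring_1) \<Rightarrow> (nat list \<Rightarrow>\<^sub>0 nat) \<Rightarrow> 'a" where
  "pmono f m = (\<Prod>v\<in>Poly_Mapping.keys m. f v ^ Poly_Mapping.lookup m v)"

lemma mono_superset:
  assumes "finite S" "Poly_Mapping.keys m \<subseteq> S"
  shows "pmono f m = (\<Prod>v\<in>S. f v ^ Poly_Mapping.lookup m v)"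
  unfolding pmono_def
  by (rule prod.mono_neutral_left) (use assms in \<open>auto simp: in_keys_iff\<close>)

lemma mono_add: "pmono f (a + b) = pmono f a * pmono f b"
proof -
  let ?S = "Poly_Mapping.keys a \<union> Poly_Mapping.keys b"
  have "pmono f (a + b) = (\<Prod>v\<in>?S. f v ^ Poly_Mapping.lookup (a+b) v)"
    by (rule mono_superset) (auto simp: keys_add Poly_Mapping.keys_add)
  also have "\<dots> = (\<Prod>v\<in>?S. f v ^ Poly_Mapping.lookup a v) * (\<Prod>v\<in>?S. f v ^ Poly_Mapping.lookup b v)"
    by (simp add: lookup_add power_add prod.distrib)
  also have "\<dots> = pmono f a * pmono f b"
    by (simp add: mono_superset[symmetric])
  finally show ?thesis .
qed

lemma mono_zero[simp]: "pmono f 0 = 1" by (simp add: pmono_def)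

lemma mono_single[simp]: "pmono f (Poly_Mapping.single v k) = f v ^ k"
  by (cases "k = 0") (auto simp: pmono_def)

lemma mono_sum: "pmono f (sum g A) = (\<Prod>x\<in>A. pmono f (g x))"
  by (induction A rule: infinite_finite_induct) (auto simp: mono_add)

lemma peval_mono: "peval h f = (\<Sum>m\<in>Poly_Mapping.keys h. Poly_Mapping.lookup h m * pmono f m)"
  by (simp add: peval_def pmono_def)

lemma peval_superset:
  assumes "finite S" "Poly_Mapping.keys h \<subseteq> S"
  shows "peval h f = (\<Sum>m\<in>S. Poly_Mapping.lookup h m * pmono f m)"
  unfolding peval_mono
  by (rule sum.mono_neutral_left) (use assms in \<open>auto simp: in_keys_iff\<close>)

lemma peval_add: "peval (a + b) f = peval a f + peval b f"
proof -
  let ?S = "Poly_Mapping.keys a \<union> Poly_Mapping.keys b"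
  have "peval (a + b) f = (\<Sum>m\<in>?S. Poly_Mapping.lookup (a+b) m * pmono f m)"
    by (rule peval_superset) (auto simp: Poly_Mapping.keys_add)
  also have "\<dots> = (\<Sum>m\<in>?S. Poly_Mapping.lookup a m * pmono f m) + (\<Sum>m\<in>?S. Poly_Mapping.lookup b m * pmono f m)"
    by (simp add: lookup_add distrib_right sum.distrib)
  also have "\<dots> = peval a f + peval b f"
    by (simp add: peval_superset[symmetric])
  finally show ?thesis .
qed

lemma peval_zero[simp]: "peval 0 f = 0" by (simp add: peval_def)

lemma peval_single[simp]: "peval (Poly_Mapping.single m c) f = c * pmono f m"
  by (cases "c = 0") (auto simp: peval_mono)

lemma peval_sum: "peval (sum g A) f = (\<Sum>x\<in>A. peval (g x) f)"
  by (induction A rule: infinite_finite_induct) (auto simp: peval_add)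

lemma pm_expand: "(h :: 'b \<Rightarrow>\<^sub>0 'c::comm_monoid_add) = (\<Sum>m\<in>Poly_Mapping.keys h. Poly_Mapping.single m (Poly_Mapping.lookup h m))"
proof (rule poly_mapping_eqI)
  fix k
  show "Poly_Mapping.lookup h k = Poly_Mapping.lookup (\<Sum>m\<in>Poly_Mapping.keys h. Poly_Mapping.single m (Poly_Mapping.lookup h m)) k"
    by (simp add: lookup_sum lookup_single when_def in_keys_iff)
qed

lemma peval_act: "peval (act_poly \<sigma> h) T = peval h (\<lambda>v. T (act_var \<sigma> v))"
  unfolding act_poly_def peval_sum peval_single act_mono_def mono_sum mono_single
  by (simp add: peval_def mult_ac)

lemma peval_tvar_mult: "peval (tvar v * q) f = f v * peval q f"
proof -
  have "tvar v * q = (\<Sum>m\<in>Poly_Mapping.keys q. Poly_Mapping.single (Poly_Mapping.single v 1 + m) (Poly_Mapping.lookup q m))"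
    by (subst pm_expand[of q]) (simp add: sum_distrib_left tvar_def mult_single)
  then show ?thesis
    apply (simp only: peval_sum peval_single)
    apply (simp add: mono_add sum_distrib_left peval_mono mult_ac)
    done
qed

lemma peval_cong: "(\<And>v. v \<in> tvars h \<Longrightarrow> f v = g v) \<Longrightarrow> peval h f = peval h g"
  unfolding peval_def tvars_def
proof (intro sum.cong refl arg_cong2[where f="(*)"] prod.cong)
  fix m v assume "(\<And>v. v \<in> \<Union> (Poly_Mapping.keys ` Poly_Mapping.keys h) \<Longrightarrow> f v = g v)"
    "m \<in> Poly_Mapping.keys h" "v \<in> Poly_Mapping.keys m"
  then have "f v = g v" by blast
  then show "f v ^ Poly_Mapping.lookup m v = g v ^ Poly_Mapping.lookup m v" by simp
qed



lemma nths_eq_nth: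
  assumes "length xs = length ys" "nths xs S = nths ys S" "j \<in> S" "j < length xs"
  shows "xs ! j = ys ! j"
  using assms
proof (induction xs arbitrary: ys S j)
  case Nil then show ?case by simp
next
  case (Cons x xs)
  then obtain y ys' where ys: "ys = y # ys'" by (cases ys) auto
  show ?case
  proof (cases j)
    case 0
    with Cons.prems ys show ?thesis by (simp add: nths_Cons)
  next
    case (Suc j')
    have "nths xs {j. Suc j \<in> S} = nths ys' {j. Suc j \<in> S}"
      using Cons.prems ys by (auto simp: nths_Cons split: if_splits)
    with Cons.IH[of ys' "{j. Suc j \<in> S}" j'] Cons.prems ys Suc show ?thesis by simp
  qed
qed

definition dep :: "nat \<Rightarrow> nat set \<Rightarrow> (nat list \<Rightarrow> 'a) \<Rightarrow> bool" where
  "dep d S F \<longleftrightarrow> (\<forall>i i'. length i = d \<longrightarrow> length i' = d \<longrightarrow> (\<forall>j\<in>S. j < d \<longrightarrow> i!j = i'!j) \<longrightarrow> F i = F i')"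

lemma dep_factor:
  assumes "dep d S F"
  shows "\<exists>A. \<forall>i. length i = d \<longrightarrow> A (nths i S) = F i"
proof -
  define A where "A ys = F (SOME i. length i = d \<and> nths i S = ys)" for ys
  have "A (nths i S) = F i" if "length i = d" for i
  proof -
    have ex: "\<exists>i'. length i' = d \<and> nths i' S = nths i S" using that by blast
    define i' where "i' = (SOME i'. length i' = d \<and> nths i' S = nths i S)"
    have "length i' = d \<and> nths i' S = nths i S" unfolding i'_def by (rule someI_ex[OF ex])
    then have "F i' = F i" using assms that nths_eq_nth[of i' i S] unfolding dep_def by metis
    then show ?thesis unfolding A_def i'_def by simp
  qed
  then show ?thesis by blast
qed

lemma decomp_sum:
  fixes T :: "nat list \<Rightarrow> 'a::comm_semiring_1"
  assumes fin: "finite I"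
    and S: "\<And>x. x \<in> I \<Longrightarrow> Sx x \<noteq> {} \<and> Sx x \<subset> {0..<d}"
    and T: "\<And>i. i \<in> box d n \<Longrightarrow> T i = (\<Sum>x\<in>I. Fa x i * Fb x i)"
    and D1: "\<And>x. x \<in> I \<Longrightarrow> dep d (Sx x) (Fa x)"
    and D2: "\<And>x. x \<in> I \<Longrightarrow> dep d ({0..<d} - Sx x) (Fb x)"
  shows "prk_decomp d n TYPE('a) T (card I)"
proof -
  have "\<forall>x\<in>I. \<exists>A. \<forall>i. length i = d \<longrightarrow> A (nths i (Sx x)) = Fa x i"
    using D1 dep_factor by blast
  then obtain A' where A': "\<And>x i. x \<in> I \<Longrightarrow> length i = d \<Longrightarrow> A' x (nths i (Sx x)) = Fa x i"
    by metis
  have "\<forall>x\<in>I. \<exists>B. \<forall>i. length i = d \<longrightarrow> B (nths i ({0..<d} - Sx x)) = Fb x i"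
    using D2 dep_factor by blast
  then obtain B' where B': "\<And>x i. x \<in> I \<Longrightarrow> length i = d \<Longrightarrow> B' x (nths i ({0..<d} - Sx x)) = Fb x i"
    by metis
  obtain g where g: "bij_betw g {0..<card I} I" using ex_bij_betw_nat_finite[OF fin] by blast
  show ?thesis unfolding prk_decomp_def
  proof (intro exI conjI allI impI ballI)
    fix k assume "k < card I"
    then have "g k \<in> I" using g bij_betwE by fastforce
    then show "(Sx \<circ> g) k \<noteq> {}" "(Sx \<circ> g) k \<subset> {0..<d}" using S by auto
  next
    fix i assume i: "i \<in> box d n"
    then have len: "length i = d" by (simp add: box_def)
    have "T i = (\<Sum>x\<in>I. Fa x i * Fb x i)" using T i .
    also have "\<dots> = (\<Sum>x\<in>I. A' x (nths i (Sx x)) * B' x (nths i ({0..<d} - Sx x)))"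
      using A' B' len by simp
    also have "\<dots> = (\<Sum>k\<in>{0..<card I}. A' (g k) (nths i (Sx (g k))) * B' (g k) (nths i ({0..<d} - Sx (g k))))"
      by (rule sum.reindex_bij_betw[OF g, symmetric])
    finally show "T i = (\<Sum>k<card I. (A' \<circ> g) k (nths i ((Sx \<circ> g) k)) * (B' \<circ> g) k (nths i ({0..<d} - (Sx \<circ> g) k)))"
      by (simp add: atLeast0LessThan)
  qed
qed

lemma sum_lessThan_add: "(\<Sum>k<a+(b::nat). f k :: 'a::comm_monoid_add) = (\<Sum>k<a. f k) + (\<Sum>k<b. f (a + k))"
  by (induction b) (simp_all add: add.assoc)

lemma decomp_add:
  assumes "prk_decomp d n TYPE('a::comm_semiring_1) T1 r1" "prk_decomp d n TYPE('a) T2 r2"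
  shows "prk_decomp d n TYPE('a) (\<lambda>i. T1 i + T2 i) (r1 + r2)"
proof -
  from assms(1) obtain S1 and A1 B1 :: "nat \<Rightarrow> nat list \<Rightarrow> 'a" where
    1: "\<forall>k<r1. S1 k \<noteq> {} \<and> S1 k \<subset> {0..<d}"
       "\<forall>i\<in>box d n. T1 i = (\<Sum>k<r1. A1 k (nths i (S1 k)) * B1 k (nths i ({0..<d} - S1 k)))"
    unfolding prk_decomp_def by blast
  from assms(2) obtain S2 and A2 B2 :: "nat \<Rightarrow> nat list \<Rightarrow> 'a" where
    2: "\<forall>k<r2. S2 k \<noteq> {} \<and> S2 k \<subset> {0..<d}"
       "\<forall>i\<in>box d n. T2 i = (\<Sum>k<r2. A2 k (nths i (S2 k)) * B2 k (nths i ({0..<d} - S2 k)))"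
    unfolding prk_decomp_def by blast
  define S where "S k = (if k < r1 then S1 k else S2 (k - r1))" for k
  define A where "A k = (if k < r1 then A1 k else A2 (k - r1))" for k
  define B where "B k = (if k < r1 then B1 k else B2 (k - r1))" for k
  show ?thesis unfolding prk_decomp_def
  proof (intro exI conjI allI impI ballI)
    fix k assume "k < r1 + r2"
    then show "S k \<noteq> {}" "S k \<subset> {0..<d}" using 1(1) 2(1) by (auto simp: S_def split: if_splits)
  next
    fix i assume i: "i \<in> box d n"
    have "(\<Sum>k<r1 + r2. A k (nths i (S k)) * B k (nths i ({0..<d} - S k)))
       = (\<Sum>k<r1. A k (nths i (S k)) * B k (nths i ({0..<d} - S k))) +
         (\<Sum>k<r2. A (r1 + k) (nths i (S (r1 + k))) * B (r1 + k) (nths i ({0..<d} - S (r1 + k))))"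
      by (rule sum_lessThan_add)
    also have "\<dots> = T1 i + T2 i" using 1(2) 2(2) i by (simp add: S_def A_def B_def)
    finally show "T1 i + T2 i = (\<Sum>k<r1 + r2. A k (nths i (S k)) * B k (nths i ({0..<d} - S k)))" by simp
  qed
qed



definition L :: "'b set \<Rightarrow> 'b \<Rightarrow> nat \<Rightarrow> nat \<Rightarrow> 'b list set" where
  "L A a d s = {xs. length xs = d \<and> set xs \<subseteq> insert a A \<and> length (filter (\<lambda>x. x = a) xs) = s}"

lemma L_finite: "finite A \<Longrightarrow> finite (L A a d s)"
  by (rule finite_subset[OF _ finite_lists_length_eq[of "insert a A" d]]) (auto simp: L_def)

lemma L_Cons: "a \<notin> A \<Longrightarrow> b # ys \<in> L A a (Suc d) s \<longleftrightarrow>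
   (b = a \<and> s \<ge> 1 \<and> ys \<in> L A a d (s - 1)) \<or> (b \<in> A \<and> ys \<in> L A a d s)"
  unfolding L_def by auto

lemma L_Nil: "[] \<notin> L A a (Suc d) s"
  unfolding L_def by auto

lemma L_Suc0: "a \<notin> A \<Longrightarrow> L A a (Suc d) 0 = (\<lambda>(b,xs). b # xs) ` (A \<times> L A a d 0)"
proof (intro set_eqI iffI)
  fix xs assume "a \<notin> A" "xs \<in> L A a (Suc d) 0"
  then show "xs \<in> (\<lambda>(b,xs). b # xs) ` (A \<times> L A a d 0)"
    by (cases xs) (auto simp: L_Cons L_Nil)
next
  fix xs assume "a \<notin> A" "xs \<in> (\<lambda>(b,xs). b # xs) ` (A \<times> L A a d 0)"
  then show "xs \<in> L A a (Suc d) 0" by (auto simp: L_Cons)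
qed

lemma L_SucSuc: "a \<notin> A \<Longrightarrow> L A a (Suc d) (Suc t) = (\<lambda>xs. a # xs) ` L A a d t \<union> (\<lambda>(b,xs). b # xs) ` (A \<times> L A a d (Suc t))"
proof (intro set_eqI iffI)
  fix xs assume "a \<notin> A" "xs \<in> L A a (Suc d) (Suc t)"
  then show "xs \<in> (\<lambda>xs. a # xs) ` L A a d t \<union> (\<lambda>(b,xs). b # xs) ` (A \<times> L A a d (Suc t))"
    by (cases xs) (auto simp: L_Cons L_Nil)
next
  fix xs assume "a \<notin> A" "xs \<in> (\<lambda>xs. a # xs) ` L A a d t \<union> (\<lambda>(b,xs). b # xs) ` (A \<times> L A a d (Suc t))"
  then show "xs \<in> L A a (Suc d) (Suc t)" by (auto simp: L_Cons)
qed

lemma card_L: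
  assumes "a \<notin> A" "finite A"
  shows "card (L A a d s) = (d choose s) * card A ^ (d - s)"
proof (induction d arbitrary: s)
  case 0
  have "L A a 0 s = (if s = 0 then {[]} else {})" by (auto simp: L_def)
  then show ?case by simp
next
  case (Suc d)
  have injC: "inj_on (\<lambda>(b,xs). b # xs) X" for X :: "('b \<times> 'b list) set" by (auto simp: inj_on_def)
  show ?case
  proof (cases s)
    case 0
    then show ?thesis using assms Suc.IH[of 0]
      by (simp add: L_Suc0 card_image[OF injC] card_cartesian_product)
  next
    case (Suc t)
    have disj: "(\<lambda>xs. a # xs) ` L A a d t \<inter> (\<lambda>(b,xs). b # xs) ` (A \<times> L A a d (Suc t)) = {}"
      using assms by auto
    have "card (L A a (Suc d) s) = card (L A a d t) + card A * card (L A a d (Suc t))"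
      using assms Suc disj
      by (simp add: L_SucSuc card_Un_disjoint L_finite card_image[OF injC] card_image card_cartesian_product)
    also have "\<dots> = (d choose t) * card A ^ (d - t) + card A * ((d choose Suc t) * card A ^ (d - Suc t))"
      using Suc.IH by simp
    also have "\<dots> = (Suc d choose s) * card A ^ (Suc d - s)"
    proof (cases "Suc t \<le> d")
      case True
      then have "card A * card A ^ (d - Suc t) = card A ^ (d - t)"
        by (metis Suc_diff_Suc Suc_le_lessD power_Suc)
      then show ?thesis using Suc True by (simp add: algebra_simps)
    next
      case False
      then show ?thesis using Suc by simp
    qed
    finally show ?thesis .
  qed
qed



lemma sum1_unique:
  fixes f :: "'b \<Rightarrow> nat"
  assumes "finite X" "\<forall>x\<in>X. 0 < f x" "sum f X = 1"
  shows "\<exists>x. X = {x} \<and> f x = 1"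
proof -
  have "X \<noteq> {}" using assms by auto
  then obtain x where x: "x \<in> X" by blast
  have "sum f X = f x + sum f (X - {x})" using assms(1) x by (simp add: sum.remove)
  moreover have "0 < f x" using assms x by auto
  ultimately have "sum f (X - {x}) = 0 \<and> f x = 1" using assms(3) by linarith
  then have "sum f (X - {x}) = 0" "f x = 1" by auto
  then have "X - {x} = {}" using assms by (simp add: sum_eq_0_iff) (metis DiffI less_not_refl singletonD subsetI)
  then show ?thesis using x \<open>f x = 1\<close> by blast
qed

lemma prk_decomp_cong:
  "(\<And>i. i \<in> box d n \<Longrightarrow> T i = T' i) \<Longrightarrow> prk_decomp d n TYPE('a::comm_semiring_1) T r = prk_decomp d n TYPE('a) T' r"
  unfolding prk_decomp_def by simp

lemma sum_first_fail:
  "(\<Sum>j<(d::nat). (if \<not> P j \<and> (\<forall>j'<j. P j') then x else 0)) = (if \<exists>j<d. \<not> P j then x else (0::'a::comm_monoid_add))"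
proof (induction d)
  case 0 then show ?case by simp
next
  case (Suc d)
  show ?case
    by (simp add: Suc) (metis less_Suc_eq not_less_eq)
qed


theorem proposition2:
  fixes d p :: nat and n :: "nat \<Rightarrow> nat"
    and h h' r' :: "'a::field tpoly" and T :: "nat list \<Rightarrow> 'a"
  assumes "d \<ge> 2" and "p \<ge> 1"
    and "in_ring d p h"
    and "h = tvar (replicate d p) * h' + r'"
    and "has_weight_ones d (p - 1) h'"
    and "has_weight_ones d p r'"
    and "replicate d p \<notin> tvars r'"
    and "\<forall>j<d. n j \<ge> p"
    and "\<forall>\<sigma>. (\<forall>j<d. \<sigma> j permutes {1..n j}) \<longrightarrow> peval (act_poly \<sigma> h) T = 0"
    and "\<exists>\<sigma>. (\<forall>j<d. \<sigma> j permutes {1..n j}) \<and> peval (act_poly \<sigma> h') T \<noteq> 0"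
  shows "prk d n T \<le> d * (p - 1) + (\<Sum>s=1..d div 2. (d choose s) * (p - 1) ^ (d - s))"
proof -
  from assms(10) obtain \<sigma>0 where \<sigma>0: "\<forall>j<d. \<sigma>0 j permutes {1..n j}"
    and c0: "peval (act_poly \<sigma>0 h') T \<noteq> 0" by blast
  define c where "c = peval h' (\<lambda>v. T (act_var \<sigma>0 v))"
  have c: "c \<noteq> 0" using c0 by (simp add: c_def peval_act)
  define q where "q = p - 1"
  have pq: "p = Suc q" using assms(2) by (simp add: q_def)
  define gen where "gen i j \<longleftrightarrow> i!j \<notin> \<sigma>0 j ` {1..q}" for i :: "nat list" and j
  define g where "g i v = map (\<lambda>j. if v!j = p then i!j else \<sigma>0 j (v!j)) [0..<d]" for i v :: "nat list"
  define Sv where "Sv v = {j. j < d \<and> v!j = p}" for v :: "nat list"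
  have inj0: "inj (\<sigma>0 j)" if "j < d" for j using \<sigma>0 that permutes_inj by blast
  have key: "T i * c + peval r' (\<lambda>v. T (g i v)) = 0" if i: "i \<in> box d n" and gi: "\<forall>j<d. gen i j" for i
  proof -
    define \<sigma> where "\<sigma> j = transpose (\<sigma>0 j p) (i!j) \<circ> \<sigma>0 j" for j
    have perm: "\<forall>j<d. \<sigma> j permutes {1..n j}"
    proof (intro allI impI)
      fix j assume j: "j<d"
      have "\<sigma>0 j p \<in> {1..n j}" using permutes_in_image[OF \<sigma>0[rule_format, OF j]] assms(2,8) j by auto
      moreover have "i!j \<in> {1..n j}" using i j by (auto simp: box_def)
      ultimately show "\<sigma> j permutes {1..n j}" unfolding \<sigma>_def
        using permutes_compose[OF \<sigma>0[rule_format, OF j] permutes_swap_id] by blast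
    qed
    have \<sigma>p: "\<sigma> j p = i!j" for j by (simp add: \<sigma>_def)
    have \<sigma>x: "\<sigma> j x = \<sigma>0 j x" if "j<d" "x \<in> {1..q}" for j x
    proof -
      have "\<sigma>0 j x \<noteq> \<sigma>0 j p" using inj0[OF that(1)] that(2) pq by (auto dest: injD)
      moreover have "\<sigma>0 j x \<noteq> i!j" using gi that unfolding gen_def by (metis image_eqI)
      ultimately show ?thesis by (simp add: \<sigma>_def transpose_def)
    qed
    have li: "length i = d" using i by (simp add: box_def)
    have 1: "act_var \<sigma> (replicate d p) = i"
      by (rule nth_equalityI) (simp_all add: act_var_def \<sigma>p li)
    have 2: "peval h' (\<lambda>v. T (act_var \<sigma> v)) = c"
      unfolding c_def
    proof (rule peval_cong)
      fix v assume "v \<in> tvars h'"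
      then have "length v = d" "\<forall>j<d. v!j \<in> {1..q}" using assms(5) by (auto simp: has_weight_ones_def in_ring_def q_def)
      then have "map (\<lambda>j. \<sigma> j (v ! j)) [0..<d] = map (\<lambda>j. \<sigma>0 j (v ! j)) [0..<d]"
        by (intro map_cong refl) (simp add: \<sigma>x)
      then show "T (act_var \<sigma> v) = T (act_var \<sigma>0 v)" unfolding act_var_def \<open>length v = d\<close> by (rule arg_cong[where f=T])
    qed
    have 3: "peval r' (\<lambda>v. T (act_var \<sigma> v)) = peval r' (\<lambda>v. T (g i v))"
    proof (rule peval_cong)
      fix v assume "v \<in> tvars r'"
      then have lv: "length v = d" and vr: "\<forall>j<d. v!j \<in> {1..p}" using assms(6) by (auto simp: has_weight_ones_def in_ring_def)
      have "act_var \<sigma> v = g i v" unfolding act_var_def g_def lv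
      proof (rule map_cong[OF refl])
        fix j assume "j \<in> set [0..<d]"
        then have j: "j < d" by simp
        show "\<sigma> j (v!j) = (if v!j = p then i!j else \<sigma>0 j (v!j))"
        proof (cases "v!j = p")
          case True then show ?thesis by (simp add: \<sigma>p)
        next
          case False then have "v!j \<in> {1..q}" using vr j pq by auto
          then show ?thesis using False \<sigma>x j by simp
        qed
      qed
      then show "T (act_var \<sigma> v) = T (g i v)" by simp
    qed
    have "peval (act_poly \<sigma> h) T = 0" using assms(9) perm by blast
    then show ?thesis using 1 2 3 by (simp add: peval_act assms(4) peval_add peval_tvar_mult)
  qed
  have rvar: "length v = d \<and> (\<forall>j<d. v!j \<in> {1..p})" if "m \<in> Poly_Mapping.keys r'" "v \<in> Poly_Mapping.keys m" for m v
    using assms(6) that by (auto simp: has_weight_ones_def in_ring_def tvars_def)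
  have notrep: "v \<noteq> replicate d p" if "m \<in> Poly_Mapping.keys r'" "v \<in> Poly_Mapping.keys m" for m v
    using assms(7) that by (auto simp: tvars_def)
  have uniq: "\<exists>v\<in>Poly_Mapping.keys m. v!j = p \<and> Poly_Mapping.lookup m v = 1 \<and> (\<forall>w\<in>Poly_Mapping.keys m. w!j = p \<longrightarrow> w = v)"
    if m: "m \<in> Poly_Mapping.keys r'" and j: "j < d" for m j
  proof -
    have "mweight m j p = 1" using assms(6) m j assms(2) by (auto simp: has_weight_ones_def)
    then have "sum (Poly_Mapping.lookup m) {v\<in>Poly_Mapping.keys m. v!j = p} = 1" by (simp add: mweight_def)
    then have "\<exists>v. {v\<in>Poly_Mapping.keys m. v!j = p} = {v} \<and> Poly_Mapping.lookup m v = 1"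
      by (intro sum1_unique) (auto simp: in_keys_iff)
    then obtain v where "{v\<in>Poly_Mapping.keys m. v!j = p} = {v}" "Poly_Mapping.lookup m v = 1"
      by blast
    then show ?thesis by blast
  qed
  have choose: "\<exists>v\<in>Poly_Mapping.keys m. Poly_Mapping.lookup m v = 1 \<and> 1 \<le> card (Sv v) \<and> card (Sv v) \<le> d div 2"
    if m: "m \<in> Poly_Mapping.keys r'" for m
  proof -
    have d0: "0 < d" using assms(1) by simp
    obtain v0 where v0: "v0 \<in> Poly_Mapping.keys m" "v0!0 = p" "Poly_Mapping.lookup m v0 = 1"
      "\<forall>w\<in>Poly_Mapping.keys m. w!0 = p \<longrightarrow> w = v0"
      using uniq[OF m d0] by blast
    have fin: "finite (Sv v)" for v by (simp add: Sv_def)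
    have sub: "Sv v \<subseteq> {0..<d}" for v by (auto simp: Sv_def)
    have "0 \<in> Sv v0" using v0(2) d0 by (simp add: Sv_def)
    then have c1: "1 \<le> card (Sv v0)" using fin[of v0] by (auto simp: Suc_le_eq card_gt_0_iff)
    show ?thesis
    proof (cases "card (Sv v0) \<le> d div 2")
      case True then show ?thesis using v0 c1 by blast
    next
      case False
      have "\<exists>j<d. v0!j \<noteq> p"
      proof (rule ccontr)
        assume "\<not> ?thesis"
        then have "v0 = replicate d p" using rvar[OF m v0(1)] by (intro nth_equalityI) auto
        then show False using notrep[OF m v0(1)] by simp
      qed
      then obtain j where j: "j < d" "v0!j \<noteq> p" by blast
      obtain v1 where v1: "v1 \<in> Poly_Mapping.keys m" "v1!j = p" "Poly_Mapping.lookup m v1 = 1"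
        "\<forall>w\<in>Poly_Mapping.keys m. w!j = p \<longrightarrow> w = v1"
        using uniq[OF m j(1)] by blast
      have disj: "Sv v0 \<inter> Sv v1 = {}"
      proof (rule ccontr)
        assume "Sv v0 \<inter> Sv v1 \<noteq> {}"
        then obtain k where k: "k < d" "v0!k = p" "v1!k = p" by (auto simp: Sv_def)
        obtain u where "\<forall>w\<in>Poly_Mapping.keys m. w!k = p \<longrightarrow> w = u" using uniq[OF m k(1)] by blast
        then have "v0 = v1" using k v0(1) v1(1) by metis
        then show False using j(2) v1(2) by simp
      qed
      have "card (Sv v0) + card (Sv v1) = card (Sv v0 \<union> Sv v1)" using disj fin by (simp add: card_Un_disjoint)
      also have "\<dots> \<le> d" using card_mono[of "{0..<d}" "Sv v0 \<union> Sv v1"] sub by auto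
      finally have "card (Sv v1) \<le> d div 2" using False by linarith
      moreover have "j \<in> Sv v1" using j(1) v1(2) by (simp add: Sv_def)
      then have "1 \<le> card (Sv v1)" using fin[of v1] by (auto simp: Suc_le_eq card_gt_0_iff)
      ultimately show ?thesis using v1(1,3) by blast
    qed
  qed
  define vm where "vm m = (SOME v. v \<in> Poly_Mapping.keys m \<and> Poly_Mapping.lookup m v = 1 \<and> 1 \<le> card (Sv v) \<and> card (Sv v) \<le> d div 2)" for m :: "nat list \<Rightarrow>\<^sub>0 nat"
  have vm: "vm m \<in> Poly_Mapping.keys m \<and> Poly_Mapping.lookup m (vm m) = 1 \<and> 1 \<le> card (Sv (vm m)) \<and> card (Sv (vm m)) \<le> d div 2"
    if "m \<in> Poly_Mapping.keys r'" for m
    unfolding vm_def using choose[OF that] by (rule someI_ex[OF bexE]) blast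
  have other: "w!j \<noteq> p" if m: "m \<in> Poly_Mapping.keys r'" and w: "w \<in> Poly_Mapping.keys m" "w \<noteq> vm m"
    and j: "j \<in> Sv (vm m)" for m w j
  proof
    assume wj: "w!j = p"
    have jd: "j < d" and vj: "vm m ! j = p" using j by (auto simp: Sv_def)
    obtain u where "\<forall>w\<in>Poly_Mapping.keys m. w!j = p \<longrightarrow> w = u" using uniq[OF m jd] by blast
    then show False using wj vj w vm[OF m] by metis
  qed
  define V where "V = vm ` Poly_Mapping.keys r'"
  define R where "R m i = (\<Prod>v\<in>Poly_Mapping.keys m - {vm m}. T (g i v) ^ Poly_Mapping.lookup m v)" for m i
  define Bu where "Bu u i = (\<Sum>m\<in>{m \<in> Poly_Mapping.keys r'. vm m = u}. Poly_Mapping.lookup r' m * R m i)" for u i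
  have expand: "peval r' (\<lambda>v. T (g i v)) = (\<Sum>u\<in>V. T (g i u) * Bu u i)" for i
  proof -
    have "peval r' (\<lambda>v. T (g i v)) = (\<Sum>m\<in>Poly_Mapping.keys r'. Poly_Mapping.lookup r' m * (T (g i (vm m)) * R m i))"
      unfolding peval_def
    proof (rule sum.cong[OF refl])
      fix m assume m: "m \<in> Poly_Mapping.keys r'"
      have "(\<Prod>v\<in>Poly_Mapping.keys m. T (g i v) ^ Poly_Mapping.lookup m v) = T (g i (vm m)) ^ Poly_Mapping.lookup m (vm m) * R m i"
      proof -
        have vk: "vm m \<in> Poly_Mapping.keys m" and l1: "Poly_Mapping.lookup m (vm m) = 1" using vm[OF m] by auto
        show ?thesis unfolding R_def
          using prod.remove[OF finite_keys vk, of "\<lambda>v. T (g i v) ^ Poly_Mapping.lookup m v"] l1 by simp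
      qed
      then show "Poly_Mapping.lookup r' m * (\<Prod>v\<in>Poly_Mapping.keys m. T (g i v) ^ Poly_Mapping.lookup m v) = Poly_Mapping.lookup r' m * (T (g i (vm m)) * R m i)"
        using vm[OF m] by simp
    qed
    also have "\<dots> = (\<Sum>u\<in>V. \<Sum>m\<in>{m\<in>Poly_Mapping.keys r'. vm m = u}. Poly_Mapping.lookup r' m * (T (g i (vm m)) * R m i))"
      unfolding V_def by (rule sum.image_gen) simp
    also have "\<dots> = (\<Sum>u\<in>V. T (g i u) * Bu u i)"
      unfolding Bu_def sum_distrib_left by (intro sum.cong refl) (auto simp: mult_ac)
    finally show ?thesis .
  qed
  have Vm: "\<exists>m. m \<in> Poly_Mapping.keys r' \<and> u = vm m" if "u \<in> V" for u using that by (auto simp: V_def)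
  define F1 where "F1 u i = (if (\<forall>j\<in>Sv u. gen i j) then - (1/c) * T (g i u) else 0)" for u i
  define F2 where "F2 u i = (if (\<forall>j\<in>{0..<d} - Sv u. gen i j) then Bu u i else 0)" for u i
  have dec_gen: "prk_decomp d n TYPE('a) (\<lambda>i. if \<forall>j<d. gen i j then T i else 0) (card V)"
  proof (rule decomp_sum[where I=V and Sx=Sv and Fa=F1 and Fb=F2])
    show "finite V" by (simp add: V_def)
  next
    fix u assume "u \<in> V"
    then obtain m where m: "m \<in> Poly_Mapping.keys r'" "u = vm m" using Vm by blast
    have c: "1 \<le> card (Sv u)" "card (Sv u) \<le> d div 2" using vm[OF m(1)] m(2) by auto
    have sub: "Sv u \<subseteq> {0..<d}" by (auto simp: Sv_def)
    show "Sv u \<noteq> {} \<and> Sv u \<subset> {0..<d}"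
    proof
      show "Sv u \<noteq> {}" using c by auto
      show "Sv u \<subset> {0..<d}" using sub c assms(1) by (metis card_atLeastLessThan diff_zero div_le_dividend div_less_dividend
           not_le one_less_numeral_iff order_le_less semiring_norm(76) zero_less_numeral le_trans psubsetI)
    qed
  next
    fix i assume i: "i \<in> box d n"
    show "(if \<forall>j<d. gen i j then T i else 0) = (\<Sum>u\<in>V. F1 u i * F2 u i)"
    proof (cases "\<forall>j<d. gen i j")
      case True
      have "(\<Sum>u\<in>V. F1 u i * F2 u i) = (\<Sum>u\<in>V. - (1/c) * (T (g i u) * Bu u i))"
        using True by (intro sum.cong refl) (auto simp: F1_def F2_def Sv_def)
      also have "\<dots> = - (1/c) * peval r' (\<lambda>v. T (g i v))" by (simp add: expand sum_distrib_left)
      also have "\<dots> = T i" using key[OF i True] c by (simp add: field_simps) (metis add.commute add_eq_0_iff mult.commute)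
      finally show ?thesis using True by simp
    next
      case False
      then obtain j where j: "j < d" "\<not> gen i j" by blast
      have zero: "F1 u i * F2 u i = 0" for u
        using j by (cases "j \<in> Sv u") (auto simp: F1_def F2_def)
      have "(\<Sum>u\<in>V. F1 u i * F2 u i) = 0" by (intro sum.neutral ballI zero)
      then show ?thesis using False by auto
    qed
  next
    fix u assume "u \<in> V"
    show "dep d (Sv u) (F1 u)" unfolding dep_def
    proof (intro allI impI)
      fix i i' :: "nat list" assume "length i = d" "length i' = d" and ag: "\<forall>j\<in>Sv u. j < d \<longrightarrow> i!j = i'!j"
      have "g i u = g i' u" unfolding g_def using ag by (intro map_cong refl) (auto simp: Sv_def)
      moreover have "(\<forall>j\<in>Sv u. gen i j) = (\<forall>j\<in>Sv u. gen i' j)" using ag by (auto simp: gen_def Sv_def)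
      ultimately show "F1 u i = F1 u i'" by (simp add: F1_def)
    qed
  next
    fix u assume "u \<in> V"
    show "dep d ({0..<d} - Sv u) (F2 u)" unfolding dep_def
    proof (intro allI impI)
      fix i i' :: "nat list" assume "length i = d" "length i' = d" and ag: "\<forall>j\<in>{0..<d} - Sv u. j < d \<longrightarrow> i!j = i'!j"
      have "R m i = R m i'" if m: "m \<in> Poly_Mapping.keys r'" "vm m = u" for m
        unfolding R_def
      proof (intro prod.cong refl arg_cong2[where f=power] arg_cong[where f=T])
        fix v assume v: "v \<in> Poly_Mapping.keys m - {vm m}"
        show "g i v = g i' v" unfolding g_def
        proof (intro map_cong refl)
          fix j assume "j \<in> set [0..<d]"
          then have jd: "j < d" by simp
          show "(if v!j = p then i!j else \<sigma>0 j (v!j)) = (if v!j = p then i'!j else \<sigma>0 j (v!j))"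
          proof (cases "v!j = p")
            case True
            then have "j \<notin> Sv u" using other[OF m(1), of v j] v m(2) by auto
            then show ?thesis using ag jd by auto
          qed simp
        qed
      qed
      then have "Bu u i = Bu u i'" unfolding Bu_def by (intro sum.cong refl) auto
      moreover have "(\<forall>j\<in>{0..<d} - Sv u. gen i j) = (\<forall>j\<in>{0..<d} - Sv u. gen i' j)" using ag by (auto simp: gen_def)
      ultimately show "F2 u i = F2 u i'" by (simp add: F2_def)
    qed
  qed
  define Is where "Is = {0..<d} \<times> {1..q}"
  define G1 where "G1 x i = (if i ! fst x = \<sigma>0 (fst x) (snd x) then (1::'a) else 0)" for x :: "nat \<times> nat" and i :: "nat list"
  define G2 where "G2 x i = (if \<forall>j'<fst x. gen i j' then T (i[fst x := \<sigma>0 (fst x) (snd x)]) else 0)" for x :: "nat \<times> nat" and i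
  have dec_sl: "prk_decomp d n TYPE('a) (\<lambda>i. if \<exists>j<d. \<not> gen i j then T i else 0) (card Is)"
  proof (rule decomp_sum[where I=Is and Sx="\<lambda>x. {fst x}" and Fa=G1 and Fb=G2])
    show "finite Is" by (simp add: Is_def)
  next
    fix x assume "x \<in> Is"
    then have x: "fst x < d" by (auto simp: Is_def)
    define y where "y = (if fst x = 0 then 1 else 0::nat)"
    have y1: "y \<in> {0..<d}" using assms(1) by (simp add: y_def)
    have y2: "y \<notin> {fst x}" by (simp add: y_def)
    have ne: "{fst x} \<noteq> {0..<d}" using y1 y2 by blast
    have sb: "{fst x} \<subseteq> {0..<d}" using x by simp
    show "{fst x} \<noteq> {} \<and> {fst x} \<subset> {0..<d}" using ne sb by blast
  next
    fix i assume i: "i \<in> box d n"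
    have li: "length i = d" using i by (simp add: box_def)
    have inner: "(\<Sum>a\<in>{1..q}. G1 (j, a) i * G2 (j, a) i) = (if \<not> gen i j \<and> (\<forall>j'<j. gen i j') then T i else 0)"
      if j: "j < d" for j
    proof (cases "gen i j")
      case True
      then have "G1 (j, a) i = 0" if "a \<in> {1..q}" for a using that by (auto simp: G1_def gen_def)
      then show ?thesis using True by simp
    next
      case False
      then obtain a0 where a0: "a0 \<in> {1..q}" "i!j = \<sigma>0 j a0" by (auto simp: gen_def)
      have "(\<Sum>a\<in>{1..q}. G1 (j, a) i * G2 (j, a) i) = (\<Sum>a\<in>{1..q}. if a = a0 then G2 (j, a) i else 0)"
        using a0 inj0[OF j] by (intro sum.cong refl) (auto simp: G1_def dest: injD)
      also have "\<dots> = G2 (j, a0) i" using a0 by simp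
      also have "\<dots> = (if \<forall>j'<j. gen i j' then T i else 0)"
      proof -
        have upd: "i[j := \<sigma>0 j a0] = i" using a0(2) by (metis list_update_id)
        show ?thesis by (auto simp: G2_def upd)
      qed
      finally show ?thesis using False by simp
    qed
    have "(\<Sum>x\<in>Is. G1 x i * G2 x i) = (\<Sum>j\<in>{0..<d}. \<Sum>a\<in>{1..q}. G1 (j, a) i * G2 (j, a) i)"
      unfolding Is_def by (simp add: sum.cartesian_product)
    also have "\<dots> = (\<Sum>j<d. if \<not> gen i j \<and> (\<forall>j'<j. gen i j') then T i else 0)"
      unfolding atLeast0LessThan by (intro sum.cong refl inner) simp
    also have "\<dots> = (if \<exists>j<d. \<not> gen i j then T i else 0)" by (rule sum_first_fail)
    finally show "(if \<exists>j<d. \<not> gen i j then T i else 0) = (\<Sum>x\<in>Is. G1 x i * G2 x i)" by simp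
  next
    fix x assume "x \<in> Is"
    then have x: "fst x < d" by (auto simp: Is_def)
    show "dep d {fst x} (G1 x)" unfolding dep_def G1_def using x by auto
  next
    fix x assume "x \<in> Is"
    then have x: "fst x < d" by (auto simp: Is_def)
    show "dep d ({0..<d} - {fst x}) (G2 x)" unfolding dep_def
    proof (intro allI impI)
      fix i i' :: "nat list" assume l: "length i = d" "length i' = d" and ag: "\<forall>j\<in>{0..<d} - {fst x}. j < d \<longrightarrow> i!j = i'!j"
      have "i[fst x := \<sigma>0 (fst x) (snd x)] = i'[fst x := \<sigma>0 (fst x) (snd x)]"
      proof (rule nth_equalityI)
        show "length (i[fst x := \<sigma>0 (fst x) (snd x)]) = length (i'[fst x := \<sigma>0 (fst x) (snd x)])" using l by simp
        fix k assume "k < length (i[fst x := \<sigma>0 (fst x) (snd x)])"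
        then show "i[fst x := \<sigma>0 (fst x) (snd x)] ! k = i'[fst x := \<sigma>0 (fst x) (snd x)] ! k"
          using l ag x by (cases "k = fst x") auto
      qed
      moreover have "(\<forall>j'<fst x. gen i j') = (\<forall>j'<fst x. gen i' j')" using ag x by (auto simp: gen_def)
      ultimately show "G2 x i = G2 x i'" unfolding G2_def by presburger
    qed
  qed
  have "prk_decomp d n TYPE('a) (\<lambda>i. (if \<exists>j<d. \<not> gen i j then T i else 0) + (if \<forall>j<d. gen i j then T i else 0)) (card Is + card V)"
    by (rule decomp_add[OF dec_sl dec_gen])
  moreover have "(if \<exists>j<d. \<not> gen i j then T i else 0) + (if \<forall>j<d. gen i j then T i else 0) = T i" for i by auto
  ultimately have dec: "prk_decomp d n TYPE('a) T (card Is + card V)" by simp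
  have "prk d n T \<le> card Is + card V" unfolding prk_def by (rule Least_le) (rule dec)
  moreover have "card Is = d * (p - 1)" by (simp add: Is_def q_def)
  moreover have "card V \<le> (\<Sum>s=1..d div 2. (d choose s) * (p - 1) ^ (d - s))"
  proof -
    have "V \<subseteq> (\<Union>s\<in>{1..d div 2}. L {1..q} p d s)"
    proof
      fix u assume "u \<in> V"
      then obtain m where m: "m \<in> Poly_Mapping.keys r'" "u = vm m" using Vm by blast
      have lu: "length u = d" "\<forall>j<d. u!j \<in> {1..p}" using rvar[of m u] vm[OF m(1)] m by auto
      have "set u \<subseteq> insert p {1..q}"
      proof
        fix x assume "x \<in> set u"
        then obtain j where "j < d" "u!j = x" using lu(1) by (auto simp: in_set_conv_nth)
        then have "x \<in> {1..Suc q}" using lu(2) pq by auto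
        then show "x \<in> insert p {1..q}" using pq by auto
      qed
      moreover have "length (filter (\<lambda>x. x = p) u) = card (Sv u)" by (simp add: length_filter_conv_card Sv_def lu)
      ultimately show "u \<in> (\<Union>s\<in>{1..d div 2}. L {1..q} p d s)" using vm[OF m(1)] m lu by (auto simp: L_def)
    qed
    then have "card V \<le> card (\<Union>s\<in>{1..d div 2}. L {1..q} p d s)"
      by (intro card_mono) (auto intro: L_finite)
    also have "\<dots> \<le> (\<Sum>s\<in>{1..d div 2}. card (L {1..q} p d s))" by (rule card_UN_le) simp
    also have "\<dots> = (\<Sum>s=1..d div 2. (d choose s) * (p - 1) ^ (d - s))"
      using pq by (simp add: card_L q_def)
    finally show ?thesis .
  qed
  ultimately show ?thesis by linarith
qed

end
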